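(* Let $f:[0,1]\to\mathbb{R}$ be a continuous function such that $f(0)=0$ and $f(1)=1$, and let $\gamma(t)=(t,f(t))$, $t\in[0,1]$. Then for each $n\in\mathbb{N}$ there exist points $A_0,A_1,\ldots,A_{n+1}$ on $\gamma$ such that $A_0=(0,0)$, $A_{n+1}=(1,1)$, all the numbers $\pi_1(\overrightarrow{A_iA_{i+1}})$ and $\pi_2(\overrightarrow{A_iA_{i+1}})$, $i=0,\ldots,n$, are strictly positive, and the two sequences $\big(\pi_1(\overrightarrow{A_iA_{i+1}})\big)_{i=0}^{n}$ and $\big(\pi_2(\overrightarrow{A_iA_{i+1}})\big)_{i=0}^{n}$ are the same after a rearrangement.
   Context: $\pi_1,\pi_2:\mathbb{R}^2\to\mathbb{R}$ denote the projections onto the $x$-axis and the $y$-axis, $\pi_1(a,b)=a$, $\pi_2(a,b)=b$. For points $A,B\in\mathbb{R}^2$, $\overrightarrow{AB}=B-A$. *)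

theory Defs
  imports "HOL-Analysis.Analysis" "HOL-Combinatorics.Permutations"
begin

end

theory Submission
  imports Defs
begin

lemma perm_aux:
  fixes n :: nat
  assumes "n > 0"
  shows "(\<lambda>i. if i = 0 then n else if i \<le> n then i - 1 else i) permutes {0..n}"
proof (rule bij_imp_permutes)
  show "bij_betw (\<lambda>i. if i = 0 then n else if i \<le> n then i - 1 else i) {0..n} {0..n}"
    by (rule bij_betw_byWitness[where f'="\<lambda>i. if i = n then 0 else if i < n then i + 1 else i"])
       (use assms in auto)
qed auto

lemma main_pos:
  fixes f :: "real \<Rightarrow> real" and n :: nat
  assumes cf: "continuous_on {0..1} f" and f0: "f 0 = 0" and f1: "f 1 = 1" and npos: "n > 0"
  shows "\<exists>A :: nat \<Rightarrow> real \<times> real.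
           (\<forall>i\<le>n+1. \<exists>t\<in>{0..1}. A i = (t, f t))
         \<and> A 0 = (0, 0) \<and> A (n+1) = (1, 1)
         \<and> (\<forall>i\<le>n. fst (A (Suc i) - A i) > 0 \<and> snd (A (Suc i) - A i) > 0)
         \<and> (\<exists>\<sigma>. \<sigma> permutes {0..n} \<and>
              (\<forall>i\<le>n. snd (A (Suc i) - A i) = fst (A (Suc (\<sigma> i)) - A (\<sigma> i))))"
proof -
  define h where "h = (\<lambda>u::real. f (max 0 (min 1 u)))"
  define B where "B = (\<lambda>(s::real) u. min (h u - (1 - s)) u)"
  define \<Phi> where "\<Phi> = (\<lambda>s. (B s ^^ n) s)"
  have ch: "continuous_on UNIV h"
    unfolding h_def
    by (rule continuous_on_compose2[OF cf]) (auto intro!: continuous_intros)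
  have hI: "h u = f u" if "0 \<le> u" "u \<le> 1" for u
    using that by (simp add: h_def)
  have cont: "continuous_on UNIV (\<lambda>s. (B s ^^ k) s)" for k
  proof (induction k)
    case 0 then show ?case by (simp add: continuous_on_id)
  next
    case (Suc k)
    have "continuous_on UNIV (\<lambda>s. min (h ((B s ^^ k) s) - (1 - s)) ((B s ^^ k) s))"
    proof -
      have c1: "continuous_on UNIV (\<lambda>s. h ((B s ^^ k) s))"
        by (rule continuous_on_compose2[OF ch Suc]) auto
      show ?thesis
        by (rule continuous_on_min[OF continuous_on_diff[OF c1] Suc])
          (intro continuous_intros)
    qed
    then show ?case by (simp add: B_def)
  qed
  have Ble: "B s u \<le> u" for s u by (simp add: B_def)
  have iter_le: "(B s ^^ k) u \<le> u" for s u k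
  proof (induction k arbitrary: u)
    case (Suc k) then show ?case using Ble[of s u]
      by (simp only: funpow_Suc_right comp_def) (meson order_trans)
  qed simp
  obtain m where nm: "n = Suc m" using npos gr0_implies_Suc by blast
  have "\<Phi> 0 = (B 0 ^^ m) (B 0 0)"
    unfolding \<Phi>_def nm funpow_Suc_right comp_def by (rule refl)
  also have "\<dots> \<le> B 0 0" by (rule iter_le)
  also have "B 0 0 = -1" by (simp add: B_def h_def f0)
  finally have Phi0: "\<Phi> 0 \<le> -1" .
  have B11: "B 1 1 = 1" by (simp add: B_def h_def f1)
  have "(B 1 ^^ k) 1 = 1" for k by (induction k) (simp_all add: B11)
  then have Phi1: "\<Phi> 1 = 1" by (simp add: \<Phi>_def)
  have "continuous_on {0..1} \<Phi>" unfolding \<Phi>_def using cont[of n]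
    by (rule continuous_on_subset) auto
  then obtain s where s01: "0 \<le> s" "s \<le> 1" and Phis: "\<Phi> s = 0"
    using IVT'[of \<Phi> 0 0 1] Phi0 Phi1 by auto
  have s0: "s \<noteq> 0" using Phis Phi0 by auto
  have s1: "s \<noteq> 1" using Phis Phi1 by auto
  define d where "d = 1 - s"
  have dpos: "d > 0" using s01 s1 by (simp add: d_def)
  define w where "w = (\<lambda>k. (B s ^^ k) s)"
  have wS: "w (Suc k) = B s (w k)" for k by (simp add: w_def)
  have w0: "w 0 = s" by (simp add: w_def)
  have wn: "w n = 0" using Phis by (simp add: w_def \<Phi>_def)
  have wdec: "w j \<le> w k" if "k \<le> j" for j k
    using that
  proof (induction j)
    case 0 then show ?case by simp
  next
    case (Suc j)
    show ?case
    proof (cases "k = Suc j")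
      case False
      then have "w (Suc j) \<le> w j" using wS Ble by simp
      then show ?thesis using Suc False by simp
    qed simp
  qed
  have stuck: "w j = w k" if "B s (w k) = w k" "k \<le> j" for j k
    using that(2)
  proof (induction j)
    case 0 then show ?case by simp
  next
    case (Suc j)
    show ?case
    proof (cases "k = Suc j")
      case False
      then have "w j = w k" using Suc by simp
      then show ?thesis using wS that(1) by simp
    qed simp
  qed
  have strict: "w (Suc k) < w k" if "k < n" for k
  proof (rule ccontr)
    assume "\<not> w (Suc k) < w k"
    then have eq: "B s (w k) = w k" using wS[of k] Ble[of s "w k"] by simp
    then have "w n = w k" using stuck[of k n] that by simp
    then have "w k = 0" using wn by simp
    then have "B s 0 = 0" using eq by simp
    moreover have "B s 0 = s - 1" using s01 by (simp add: B_def h_def f0)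
    ultimately show False using s1 by simp
  qed
  have wrange: "0 \<le> w k \<and> w k \<le> 1" if "k \<le> n" for k
    using wdec[OF that] wdec[of 0 k] wn w0 s01 by simp
  have wstep: "f (w k) = w (Suc k) + d" if "k < n" for k
  proof -
    have "w (Suc k) = min (h (w k) - (1 - s)) (w k)" using wS by (simp add: B_def)
    then have "w (Suc k) = h (w k) - (1 - s)" using strict[OF that] by (simp add: min_def split: if_splits)
    then show ?thesis using hI[of "w k"] wrange[of k] that by (simp add: d_def)
  qed
  define x where "x = (\<lambda>i. w (n - i))"
  have x_step: "f (x i) = x (i - 1) + d \<and> x (i - 1) < x i" if "0 < i" "i \<le> n" for i
  proof -
    have e: "Suc (n - i) = n - (i - 1)" using that by simp
    show ?thesis using wstep[of "n - i"] strict[of "n - i"] that e by (simp add: x_def)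
  qed
  have x0: "x 0 = 0" by (simp add: x_def wn)
  have xn: "x n = s" by (simp add: x_def w0)
  have xr: "0 \<le> x i \<and> x i \<le> 1" if "i \<le> n" for i using wrange[of "n - i"] by (simp add: x_def)
  define A where "A = (\<lambda>i. if i \<le> n then (x i, f (x i)) else (1, 1))"
  define \<sigma> where "\<sigma> = (\<lambda>i::nat. if i = 0 then n else if i \<le> n then i - 1 else i)"
  have dx: "fst (A (Suc i) - A i) = (if i < n then x (Suc i) - x i else 1 - s)" if "i \<le> n" for i
    using that xn by (auto simp: A_def)
  have dy: "snd (A (Suc i) - A i) = (if i < n then f (x (Suc i)) - f (x i) else 1 - f s)" if "i \<le> n" for i
    using that xn by (auto simp: A_def)
  have dxpos: "fst (A (Suc i) - A i) > 0" if "i \<le> n" for i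
  proof (cases "i < n")
    case True then show ?thesis using dx[OF that] x_step[of "Suc i"] by simp
  next
    case False then show ?thesis using dx[OF that] s01 s1 by simp
  qed
  have dyval: "snd (A (Suc i) - A i) = fst (A (Suc (\<sigma> i)) - A (\<sigma> i))" if iln: "i \<le> n" for i
  proof -
    consider "i = 0" | "0 < i" "i < n" | "i = n" "0 < i" using iln npos by linarith
    then show ?thesis
    proof cases
      case 1
      then show ?thesis using dy[OF iln] dx[of n] x_step[of 1] x0 f0 npos
        by (simp add: \<sigma>_def d_def)
    next
      case 2
      have "f (x (Suc i)) = x i + d" using x_step[of "Suc i"] 2 by simp
      moreover have "f (x i) = x (i - 1) + d" using x_step[of i] 2 by simp
      moreover have "Suc (i - 1) = i" using 2 by simp
      moreover have "i - 1 < n" "i - 1 \<le> n" using 2 by auto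
      moreover have "\<sigma> i = i - 1" using 2 by (simp add: \<sigma>_def)
      ultimately show ?thesis using dy[OF iln] dx[of "i - 1"] 2 by simp
    next
      case 3
      have "f s = x (n - 1) + d" using x_step[of n] 3 xn by simp
      moreover have "Suc (n - 1) = n" using 3 by simp
      ultimately show ?thesis using dy[OF iln] dx[of "n - 1"] 3 xn by (simp add: \<sigma>_def d_def)
    qed
  qed
  have dypos: "snd (A (Suc i) - A i) > 0" if "i \<le> n" for i
  proof -
    have "\<sigma> i \<le> n" using that by (auto simp: \<sigma>_def)
    then show ?thesis using dyval[OF that] dxpos by simp
  qed
  have perm: "\<sigma> permutes {0..n}" unfolding \<sigma>_def by (rule perm_aux[OF npos])
  show ?thesis
  proof (intro exI conjI)
    show "\<forall>i\<le>n+1. \<exists>t\<in>{0..1}. A i = (t, f t)"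
    proof (intro allI impI)
      fix i assume "i \<le> n + 1"
      show "\<exists>t\<in>{0..1}. A i = (t, f t)"
      proof (cases "i \<le> n")
        case True then show ?thesis using xr[OF True] by (auto simp: A_def)
      next
        case False then show ?thesis using f1 by (auto simp: A_def)
      qed
    qed
    show "A 0 = (0, 0)" using x0 f0 by (simp add: A_def)
    show "A (n + 1) = (1, 1)" by (simp add: A_def)
    show "\<forall>i\<le>n. 0 < fst (A (Suc i) - A i) \<and> 0 < snd (A (Suc i) - A i)"
      using dxpos dypos by blast
    show "\<sigma> permutes {0..n}" by (rule perm)
    show "\<forall>i\<le>n. snd (A (Suc i) - A i) = fst (A (Suc (\<sigma> i)) - A (\<sigma> i))"
      using dyval by blast
  qed
qed

theorem corollary1:
  fixes f :: "real \<Rightarrow> real" and n :: nat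
  assumes "continuous_on {0..1} f" and "f 0 = 0" and "f 1 = 1"
  shows "\<exists>A :: nat \<Rightarrow> real \<times> real.
           (\<forall>i\<le>n+1. \<exists>t\<in>{0..1}. A i = (t, f t))
         \<and> A 0 = (0, 0) \<and> A (n+1) = (1, 1)
         \<and> (\<forall>i\<le>n. fst (A (Suc i) - A i) > 0 \<and> snd (A (Suc i) - A i) > 0)
         \<and> (\<exists>\<sigma>. \<sigma> permutes {0..n} \<and>
              (\<forall>i\<le>n. snd (A (Suc i) - A i) = fst (A (Suc (\<sigma> i)) - A (\<sigma> i))))"
proof (cases "n = 0")
  case False
  then show ?thesis using main_pos[OF assms] by simp
next
  case True
  define A :: "nat \<Rightarrow> real \<times> real" where "A = (\<lambda>i. if i = 0 then (0, 0) else (1, 1))"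
  show ?thesis
  proof (intro exI conjI)
    show "\<forall>i\<le>n+1. \<exists>t\<in>{0..1}. A i = (t, f t)"
      using True assms by (auto simp: A_def le_Suc_eq intro!: bexI[of _ 0] bexI[of _ 1])
    show "A 0 = (0, 0)" by (simp add: A_def)
    show "A (n + 1) = (1, 1)" by (simp add: A_def)
    show "\<forall>i\<le>n. 0 < fst (A (Suc i) - A i) \<and> 0 < snd (A (Suc i) - A i)"
      using True by (simp add: A_def)
    show "id permutes {0..n}" by (rule permutes_id)
    show "\<forall>i\<le>n. snd (A (Suc i) - A i) = fst (A (Suc (id i)) - A (id i))"
      using True by (simp add: A_def)
  qed
qed

end
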